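(* Let $n,f$ be integers with $1\le f\le n-1$ and $\Pi$ a set of $n$ processes. The following algorithm, using the oracle $\mathcal O.\mathrm{Cons}(\Pi,f)$, solves $(f+1)\text{-TAg}(\Pi,f)$: each process $p$ sends its initial value $v_p$ to all processes, waits until it has received initial values from $n-f$ processes, sets $x_p$ to the minimum of the values received, queries $\mathcal O.\mathrm{Cons}(\Pi,f)$ with $x_p$, and decides the value answered by the oracle. In particular $(f+1)\text{-TAg}(n,f)$ is $C$-reducible to $\mathrm{Cons}(n,f)$ (and hence, for every $k\in\{f+1,\dots,n\}$, $k\text{-TAg}(n,f)$ is equivalent to $\mathrm{Cons}(n,f)$ with respect to $C$-reducibility).
   Context: Model: a finite set of processes runs an asynchronous algorithm communicating by reliable message passing with unbounded delays and speeds; processes fail only by crashing. Time is $\mathcal T=\mathbb N$; a failure pattern $F$ for $\Pi$ is a nondecreasing map $\mathcal T\to2^\Pi$, $Faulty(F)=\bigcup_tF(t)$. A binary agreement problem $P$ for $\Pi$ maps each $(F,\vec V)$, $\vec V\in\{0,1\}^\Pi$, to a nonempty $P(F,\vec V)\subseteq\{0,1\}$; a task is $T=(P,f)$. An algorithm solves $T$ if in every run with $|Faulty(F)|\le f$ and initial values $\vec V$: every correct process eventually decides, decisions are irrevocable, no two processes decide differently, and decisions lie in $P(F,\vec V)$. $k\text{-TAg}_\Pi(F,\vec V)=\{0\}$ if at least $k$ entries of $\vec V$ are $0$; $=\{1\}$ if $\vec V$ is all-ones and $|Faulty(F)|\le k-1$; $=\{0,1\}$ otherwise; $k\text{-TAg}(\Pi,f)=(k\text{-TAg}_\Pi,f)$;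 $\mathrm{Cons}(\Pi,f)=|\Pi|\text{-TAg}(\Pi,f)$; $k\text{-TAg}(n,f)$, $\mathrm{Cons}(n,f)$ denote the versions for $\Pi=\{1,\dots,n\}$. Oracles: for $T=(P,f)$ on $\Pi$, $\mathcal O.T$ is a black box with consultants $\Pi$; its history is a sequence of successive consultations, in each of which every consultant may submit at most one query in $\{0,1\}$ and the oracle returns a common response $d$ with $d\in P(F,\vec V)$ for every $\vec V$ extending the partial query vector (the oracle may use the whole failure pattern, including future crashes), and every correct querier gets the response whenever at least $|\Pi|-f$ consultants query; $\mathcal O.T$ is the most general such oracle. $T_1\le_C T_2$ means there is an algorithm solving $T_1$ whose processes may additionally consult the oracle $\mathcal O.T_2$ (for a renamed copy of $T_2$ on the relevant processes). *)

theory Defs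
  imports Main
begin

text \<open>Binary values are naturals in {0,1}; a value vector is a map 'p => nat, only its
  entries on Pi matter.\<close>

definition failure_pattern :: "'p set \<Rightarrow> (nat \<Rightarrow> 'p set) \<Rightarrow> bool" where
  "failure_pattern Pi F \<longleftrightarrow> mono F \<and> (\<forall>t. F t \<subseteq> Pi)"

definition faulty :: "(nat \<Rightarrow> 'p set) \<Rightarrow> 'p set" where
  "faulty F = (\<Union>t. F t)"

definition binvec :: "'p set \<Rightarrow> ('p \<Rightarrow> nat) \<Rightarrow> bool" where
  "binvec Pi V \<longleftrightarrow> (\<forall>p\<in>Pi. V p \<in> {0, 1})"

definition TAg :: "nat \<Rightarrow> 'p set \<Rightarrow> (nat \<Rightarrow> 'p set) \<Rightarrow> ('p \<Rightarrow> nat) \<Rightarrow> nat set" where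
  "TAg k Pi F V =
     (if k \<le> card {p\<in>Pi. V p = 0} then {0}
      else if (\<forall>p\<in>Pi. V p = 1) \<and> card (faulty F) \<le> k - 1 then {1}
      else {0, 1})"

definition ConsP :: "'p set \<Rightarrow> (nat \<Rightarrow> 'p set) \<Rightarrow> ('p \<Rightarrow> nat) \<Rightarrow> nat set" where
  "ConsP Pi = TAg (card Pi) Pi"

definition received :: "('p \<Rightarrow> 'p \<Rightarrow> nat option) \<Rightarrow> 'p \<Rightarrow> nat \<Rightarrow> 'p set" where
  "received dlv p t = {q. \<exists>s. dlv p q = Some s \<and> s \<le> t}"

text \<open>A run of the algorithm of the theorem (send initial value to all, wait for n-f
  values, query O.Cons(Pi,f) with their minimum, decide the oracle's answer), in the
  asynchronous crash-prone model with reliable links and the oracle O.Cons(Pi,f):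
  \<^item> sendT p = Some t : p broadcasts its initial value at time t (p alive then);
  \<^item> dlv p q = Some t : the message of q is delivered to p at time t (p alive then);
  \<^item> qry p = Some (t, x) : p submits query x to the oracle at time t;
  \<^item> resp p = Some t : p receives the oracle's (common) response d at time t;
  and p decides d when it receives the response.
  The oracle O.Cons(Pi,f) is used in a single consultation (each process queries
  at most once); its response d must lie in Cons_Pi(F,W) for every binary W extending
  the query vector, and if at least n-f consultants query, every correct querier gets
  the response.  Correct processes take infinitely many steps (fairness): a correct
  process sends, and queries once it has received n-f values.\<close>
definition alg_run ::
  "'p set \<Rightarrow> nat \<Rightarrow> (nat \<Rightarrow> 'p set) \<Rightarrow> ('p \<Rightarrow> nat) \<Rightarrow> ('p \<Rightarrow> nat option) \<Rightarrow>
   ('p \<Rightarrow> 'p \<Rightarrow> nat option) \<Rightarrow> ('p \<Rightarrow> (nat \<times> nat) option) \<Rightarrow> ('p \<Rightarrow> nat option) \<Rightarrow> nat \<Rightarrow> bool"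
where
  "alg_run Pi f F V sendT dlv qry resp d \<longleftrightarrow>
     \<comment> \<open>only processes of Pi act\<close>
     (\<forall>p. p \<notin> Pi \<longrightarrow> sendT p = None \<and> qry p = None \<and> resp p = None \<and>
                     (\<forall>q. dlv p q = None \<and> dlv q p = None)) \<and>
     \<comment> \<open>a process sends only while alive; correct processes send\<close>
     (\<forall>p t. sendT p = Some t \<longrightarrow> p \<notin> F t) \<and>
     (\<forall>p\<in>Pi. p \<notin> faulty F \<longrightarrow> sendT p \<noteq> None) \<and>
     \<comment> \<open>no creation of messages; receiver alive at reception\<close>
     (\<forall>p q t. dlv p q = Some t \<longrightarrow> p \<notin> F t \<and> (\<exists>s. sendT q = Some s \<and> s \<le> t)) \<and>
     \<comment> \<open>reliable links: messages sent to correct processes are delivered\<close>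
     (\<forall>p\<in>Pi. \<forall>q. p \<notin> faulty F \<longrightarrow> sendT q \<noteq> None \<longrightarrow> dlv p q \<noteq> None) \<and>
     \<comment> \<open>query only after sending and after receiving n-f values; query = min of received values\<close>
     (\<forall>p t x. qry p = Some (t, x) \<longrightarrow>
         p \<notin> F t \<and> (\<exists>s. sendT p = Some s \<and> s \<le> t) \<and>
         card Pi - f \<le> card (received dlv p t) \<and> x = Min (V ` received dlv p t)) \<and>
     \<comment> \<open>fairness: a correct process that has received n-f values queries\<close>
     (\<forall>p\<in>Pi. p \<notin> faulty F \<longrightarrow> (\<exists>t. card Pi - f \<le> card (received dlv p t)) \<longrightarrow> qry p \<noteq> None) \<and>
     \<comment> \<open>responses only go to queriers, after their query, while alive\<close>
     (\<forall>p t. resp p = Some t \<longrightarrow> p \<notin> F t \<and> (\<exists>s x. qry p = Some (s, x) \<and> s \<le> t)) \<and>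
     \<comment> \<open>oracle safety: d is allowed by Cons for every completion of the query vector\<close>
     (\<forall>W. binvec Pi W \<longrightarrow> (\<forall>p s x. qry p = Some (s, x) \<longrightarrow> W p = x) \<longrightarrow> d \<in> ConsP Pi F W) \<and>
     \<comment> \<open>oracle liveness: if at least n-f consultants query, every correct querier gets d\<close>
     (card Pi - f \<le> card {p\<in>Pi. qry p \<noteq> None} \<longrightarrow>
        (\<forall>p\<in>Pi. p \<notin> faulty F \<longrightarrow> qry p \<noteq> None \<longrightarrow> resp p \<noteq> None))"

definition decision :: "('p \<Rightarrow> nat option) \<Rightarrow> nat \<Rightarrow> 'p \<Rightarrow> nat option" where
  "decision resp d p = (if resp p = None then None else Some d)"

text \<open>Correctness conditions of "solving" the problem P in a run with decisions dec
  (decisions are single values, hence irrevocable).\<close>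
definition solves_in_run ::
  "'p set \<Rightarrow> ((nat \<Rightarrow> 'p set) \<Rightarrow> ('p \<Rightarrow> nat) \<Rightarrow> nat set) \<Rightarrow> (nat \<Rightarrow> 'p set) \<Rightarrow> ('p \<Rightarrow> nat) \<Rightarrow>
   ('p \<Rightarrow> nat option) \<Rightarrow> bool" where
  "solves_in_run Pi P F V dec \<longleftrightarrow>
     (\<forall>p\<in>Pi. p \<notin> faulty F \<longrightarrow> dec p \<noteq> None) \<and>
     (\<forall>p q a b. dec p = Some a \<longrightarrow> dec q = Some b \<longrightarrow> a = b) \<and>
     (\<forall>p a. dec p = Some a \<longrightarrow> a \<in> P F V)"

end

theory Submission
  imports Defs
begin

theorem mainTheorem5:
  fixes Pi :: "'p set" and n f :: nat
  assumes "finite Pi" and "card Pi = n" and "1 \<le> f" and "f \<le> n - 1"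
    and "failure_pattern Pi F" and "card (faulty F) \<le> f"
    and "binvec Pi V"
    and "alg_run Pi f F V sendT dlv qry resp d"
  shows "solves_in_run Pi (TAg (f + 1) Pi) F V (decision resp d)"
proof -
  note R = assms(8)[unfolded alg_run_def]
  have n2: "n \<ge> 2" using assms(3,4) by linarith
  have recsub: "received dlv p t \<subseteq> Pi" for p t
    using R unfolding received_def by fastforce
  have recfin: "finite (received dlv p t)" for p t
    using recsub assms(1) finite_subset by blast
  have qinfo: "received dlv p t \<noteq> {} \<and> x = Min (V ` received dlv p t)
      \<and> card Pi - f \<le> card (received dlv p t)" if "qry p = Some (t, x)" for p t x
  proof -
    have c: "card Pi - f \<le> card (received dlv p t)" "x = Min (V ` received dlv p t)"
      using R that by blast+
    moreover have "received dlv p t \<noteq> {}" proof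
      assume "received dlv p t = {}"
      hence "card Pi - f \<le> 0" using c(1) by simp
      thus False using assms(2,4) n2 by linarith
    qed
    ultimately show ?thesis by blast
  qed
  have qbin: "x \<in> {0,1}" if "qry p = Some (t, x)" for p t x
  proof -
    from qinfo[OF that] have "x \<in> V ` received dlv p t" using recfin
      by (metis Min_in finite_imageI image_is_empty)
    then obtain q where "q \<in> received dlv p t" "x = V q" by blast
    then show ?thesis using recsub[of p t] assms(7) unfolding binvec_def by (metis subsetD)
  qed
  have fsub: "faulty F \<subseteq> Pi" using assms(5) unfolding failure_pattern_def faulty_def by blast
  define C where "C = Pi - faulty F"
  have cardC: "card C \<ge> n - f" unfolding C_def
    using card_Diff_subset[OF finite_subset[OF fsub assms(1)] fsub] assms(2,6) by simp
  have finC: "finite C" unfolding C_def using assms(1) by simp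
  have allq: "qry p \<noteq> None" if "p \<in> C" for p
  proof -
    have "\<forall>q\<in>C. \<exists>s. dlv p q = Some s"
    proof
      fix q assume "q \<in> C"
      hence "sendT q \<noteq> None" using R unfolding C_def by blast
      hence "dlv p q \<noteq> None" using R that unfolding C_def by blast
      thus "\<exists>s. dlv p q = Some s" by auto
    qed
    then obtain g where g: "\<forall>q\<in>C. dlv p q = Some (g q)" by metis
    define T where "T = Max (g ` C)"
    have "C \<subseteq> received dlv p T" unfolding received_def T_def using g finC by auto
    hence "card C \<le> card (received dlv p T)" using card_mono recfin by blast
    hence "card Pi - f \<le> card (received dlv p T)" using cardC assms(2) by simp
    thus ?thesis using R that unfolding C_def by blast
  qed
  have "C \<subseteq> {p\<in>Pi. qry p \<noteq> None}" using allq C_def by blast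
  hence "card Pi - f \<le> card {p\<in>Pi. qry p \<noteq> None}" using cardC assms(1,2)
  proof -
    have "card C \<le> card {p\<in>Pi. qry p \<noteq> None}" using \<open>C \<subseteq> _\<close> assms(1) by (intro card_mono) auto
    thus ?thesis using cardC assms(2) by linarith
  qed
  hence trm: "\<forall>p\<in>Pi. p \<notin> faulty F \<longrightarrow> resp p \<noteq> None" using R allq C_def by blast
  define W where "W c = (\<lambda>p. case qry p of None \<Rightarrow> c | Some (s, x) \<Rightarrow> x)" for c :: nat
  have Wb: "binvec Pi (W c)" if "c \<in> {0,1}" for c
    unfolding binvec_def W_def using that qbin by (auto split: option.split)
  have Wd: "d \<in> ConsP Pi F (W c)" if "c \<in> {0,1}" for c
    using R Wb[OF that] unfolding W_def by auto
  have valid: "d \<in> TAg (f + 1) Pi F V"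
  proof (cases "f + 1 \<le> card {p\<in>Pi. V p = 0}")
    case True
    have z: "x = 0" if "qry p = Some (t, x)" for p t x
    proof -
      let ?Z = "{p\<in>Pi. V p = 0}"
      have cgt: "card ?Z + card (received dlv p t) > card Pi"
        using True qinfo[OF that] assms(2,4) n2 by linarith
      have "?Z \<inter> received dlv p t \<noteq> {}"
      proof
        assume e: "?Z \<inter> received dlv p t = {}"
        have "card (?Z \<union> received dlv p t) = card ?Z + card (received dlv p t)"
          using card_Un_disjoint[OF _ recfin e] assms(1) by simp
        moreover have "card (?Z \<union> received dlv p t) \<le> card Pi"
          using recsub assms(1) by (intro card_mono) auto
        ultimately show False using \<open>card ?Z + card (received dlv p t) > card Pi\<close> by linarith
      qed
      then obtain q where q: "q \<in> received dlv p t" "V q = 0" by blast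
      have "Min (V ` received dlv p t) \<le> 0" using q recfin by (metis Min_le finite_imageI imageI)
      thus ?thesis using qinfo[OF that] by simp
    qed
    have "{p\<in>Pi. W 0 p = 0} = Pi" unfolding W_def using z by (auto split: option.split)
    hence "ConsP Pi F (W 0) = {0}" unfolding ConsP_def TAg_def by simp
    thus ?thesis using Wd[of 0] True unfolding TAg_def by simp
  next
    case False
    show ?thesis
    proof (cases "(\<forall>p\<in>Pi. V p = 1) \<and> card (faulty F) \<le> f + 1 - 1")
      case True
      have o: "x = 1" if "qry p = Some (t, x)" for p t x
      proof -
        from qinfo[OF that] have "x \<in> V ` received dlv p t" using recfin
          by (metis Min_in finite_imageI image_is_empty)
        then show ?thesis using recsub True by auto
      qed
      have "\<forall>p\<in>Pi. W 1 p = 1" unfolding W_def using o by (auto split: option.split)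
      hence "{p\<in>Pi. W 1 p = 0} = {}" by auto
      hence "\<not> card Pi \<le> card {p\<in>Pi. W 1 p = 0}" using n2 assms(2) by (simp only: card.empty)
      hence "ConsP Pi F (W 1) = {1}" unfolding ConsP_def TAg_def
        using True n2 assms(2,4) \<open>\<forall>p\<in>Pi. W 1 p = 1\<close> by (simp del: One_nat_def)
      thus ?thesis using Wd[of 1] True False unfolding TAg_def by simp
    next
      case F2: False
      have "ConsP Pi F (W 0) \<subseteq> {0,1}" unfolding ConsP_def TAg_def by auto
      thus ?thesis using Wd[of 0] False F2 unfolding TAg_def by auto
    qed
  qed
  show ?thesis unfolding solves_in_run_def decision_def using trm valid by auto
qed

end
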